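(* Let $\mathfrak{A}=\{\mathscr{M}^{KI},\mathscr{M}^{KK},\mathscr{A}^{KI},\mathscr{A}^{KK},\mathscr{H}^{KI},\mathscr{H}^{KK}\}$. Then the graph parameters $p_{\mathfrak{A}}$ and $\widetilde{\omega}$ are equivalent, i.e. there exist functions $f,g\colon\mathbb{N}\to\mathbb{N}$ such that $p_{\mathfrak{A}}(G)\le f(\widetilde{\omega}(G))$ and $\widetilde{\omega}(G)\le g(p_{\mathfrak{A}}(G))$ for every finite graph $G$.
   Context: Two vertices are equivalent if they lie in exactly the same maximal cliques; $\widetilde{\omega}(G)$ is the maximum over maximal cliques $K$ of $G$ of the number of equivalence classes meeting $K$. For each $n\ge1$ let $X=\{x_1,\dots,x_n\}$, $Y=\{y_1,\dots,y_n\}$ be disjoint ordered sets. The matching has edges $x_iy_i$; the anti-matching has edges $x_iy_j$ for $i\neq j$; the half-graph has edges $x_iy_j$ for $i\le j$. $\mathscr{M}^{KI}_n$ (resp. $\mathscr{A}^{KI}_n$, $\mathscr{H}^{KI}_n$) is the graph on $X\cup Y$ consisting of the matching (resp. anti-matching, half-graph) between $X$ and $Y$ together with all edges within $X$ (so $X$ is a clique and $Y$ independent); $\mathscr{M}^{KK}_n$, $\mathscr{A}^{KK}_n$, $\mathscr{H}^{KK}_n$ are obtained by additionally making $Y$ a clique. For a family $\mathfrak{F}$ of sequences $\langle\mathscr{X}_n\rangle_n$, $p_{\mathfrak{F}}(G)$ is the maximum $n$ such that some $\mathscr{X}\in\mathfrak{F}$ has $\mathscr{X}_n$ as an induced subgraph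 of $G$. *)

theory Defs
  imports Main
begin

definition graph :: "'v set \<Rightarrow> ('v \<Rightarrow> 'v \<Rightarrow> bool) \<Rightarrow> bool" where
  "graph V E \<longleftrightarrow> finite V \<and> (\<forall>x y. E x y \<longrightarrow> x \<in> V \<and> y \<in> V \<and> x \<noteq> y \<and> E y x)"

definition clique :: "'v set \<Rightarrow> ('v \<Rightarrow> 'v \<Rightarrow> bool) \<Rightarrow> 'v set \<Rightarrow> bool" where
  "clique V E K \<longleftrightarrow> K \<subseteq> V \<and> (\<forall>x\<in>K. \<forall>y\<in>K. x \<noteq> y \<longrightarrow> E x y)"

definition max_clique :: "'v set \<Rightarrow> ('v \<Rightarrow> 'v \<Rightarrow> bool) \<Rightarrow> 'v set \<Rightarrow> bool" where
  "max_clique V E K \<longleftrightarrow> clique V E K \<and> (\<forall>K'. clique V E K' \<and> K \<subseteq> K' \<longrightarrow> K' = K)"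

definition clique_equiv :: "'v set \<Rightarrow> ('v \<Rightarrow> 'v \<Rightarrow> bool) \<Rightarrow> 'v \<Rightarrow> 'v \<Rightarrow> bool" where
  "clique_equiv V E u v \<longleftrightarrow> (\<forall>K. max_clique V E K \<longrightarrow> (u \<in> K \<longleftrightarrow> v \<in> K))"

definition equiv_class :: "'v set \<Rightarrow> ('v \<Rightarrow> 'v \<Rightarrow> bool) \<Rightarrow> 'v \<Rightarrow> 'v set" where
  "equiv_class V E v = {u \<in> V. clique_equiv V E u v}"

definition classes_meeting :: "'v set \<Rightarrow> ('v \<Rightarrow> 'v \<Rightarrow> bool) \<Rightarrow> 'v set \<Rightarrow> nat" where
  "classes_meeting V E K = card {C \<in> equiv_class V E ` V. C \<inter> K \<noteq> {}}"

definition omega_tilde :: "'v set \<Rightarrow> ('v \<Rightarrow> 'v \<Rightarrow> bool) \<Rightarrow> nat" where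
  "omega_tilde V E = Max {classes_meeting V E K | K. max_clique V E K}"

definition induced_sub :: "'w set \<times> ('w \<Rightarrow> 'w \<Rightarrow> bool) \<Rightarrow> 'v set \<Rightarrow> ('v \<Rightarrow> 'v \<Rightarrow> bool) \<Rightarrow> bool" where
  "induced_sub H V E \<longleftrightarrow> (\<exists>h. inj_on h (fst H) \<and> h ` fst H \<subseteq> V \<and>
      (\<forall>x\<in>fst H. \<forall>y\<in>fst H. snd H x y \<longleftrightarrow> E (h x) (h y)))"

text \<open>Template graphs on vertices (False,i) = x_i and (True,i) = y_i, 1 \<le> i \<le> n.
  B is the bipartite relation (x_i y_j is an edge iff B i j); X is always a clique,
  Y is a clique iff cY.\<close>
definition tmpl_V :: "nat \<Rightarrow> (bool \<times> nat) set" where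
  "tmpl_V n = {(b, i). 1 \<le> i \<and> i \<le> n}"

definition tmpl :: "(nat \<Rightarrow> nat \<Rightarrow> bool) \<Rightarrow> bool \<Rightarrow> nat \<Rightarrow> (bool \<times> nat) set \<times> ((bool \<times> nat) \<Rightarrow> (bool \<times> nat) \<Rightarrow> bool)" where
  "tmpl B cY n = (tmpl_V n, (\<lambda>u v. u \<in> tmpl_V n \<and> v \<in> tmpl_V n \<and> u \<noteq> v \<and>
      ((\<not> fst u \<and> \<not> fst v) \<or> (cY \<and> fst u \<and> fst v)
       \<or> (\<not> fst u \<and> fst v \<and> B (snd u) (snd v))
       \<or> (fst u \<and> \<not> fst v \<and> B (snd v) (snd u)))))"

definition matching_rel :: "nat \<Rightarrow> nat \<Rightarrow> bool" where "matching_rel i j \<longleftrightarrow> i = j"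
definition antimatching_rel :: "nat \<Rightarrow> nat \<Rightarrow> bool" where "antimatching_rel i j \<longleftrightarrow> i \<noteq> j"
definition half_rel :: "nat \<Rightarrow> nat \<Rightarrow> bool" where "half_rel i j \<longleftrightarrow> i \<le> j"

definition M_KI where "M_KI = tmpl matching_rel False"
definition M_KK where "M_KK = tmpl matching_rel True"
definition A_KI where "A_KI = tmpl antimatching_rel False"
definition A_KK where "A_KK = tmpl antimatching_rel True"
definition H_KI where "H_KI = tmpl half_rel False"
definition H_KK where "H_KK = tmpl half_rel True"

definition family_A where "family_A = {M_KI, M_KK, A_KI, A_KK, H_KI, H_KK}"

definition p_fam :: "(nat \<Rightarrow> 'w set \<times> ('w \<Rightarrow> 'w \<Rightarrow> bool)) set \<Rightarrow> 'v set \<Rightarrow> ('v \<Rightarrow> 'v \<Rightarrow> bool) \<Rightarrow> nat" where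
  "p_fam F V E = Max (insert 0 {n. 1 \<le> n \<and> (\<exists>X\<in>F. induced_sub (X n) V E)})"

end

theory Submission
  imports Defs "HOL-Library.Ramsey"
begin

lemma graph_E: "graph V E \<Longrightarrow> E x y \<Longrightarrow> E y x \<and> x \<in> V \<and> y \<in> V \<and> x \<noteq> y"
  unfolding graph_def by blast

lemma ex_max_clique:
  assumes g: "graph V E" and C: "Defs.clique V E C"
  shows "\<exists>K. max_clique V E K \<and> C \<subseteq> K"
proof -
  define F where "F = {K. Defs.clique V E K \<and> C \<subseteq> K}"
  have finV: "finite V" using g graph_def by blast
  have "F \<subseteq> Pow V" unfolding F_def Defs.clique_def by auto
  then have finF: "finite F" using finV by (meson finite_Pow_iff finite_subset)
  have "C \<in> F" using C unfolding F_def by auto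
  define m where "m = Max (card ` F)"
  have "m \<in> card ` F" unfolding m_def using finF \<open>C \<in> F\<close> by (intro Max_in) auto
  then obtain K where K: "K \<in> F" "card K = m" by auto
  have "max_clique V E K"
    unfolding max_clique_def
  proof (intro conjI allI impI)
    show "Defs.clique V E K" using K unfolding F_def by auto
    fix K' assume K': "Defs.clique V E K' \<and> K \<subseteq> K'"
    then have "K' \<in> F" using K unfolding F_def by auto
    then have "card K' \<le> card K" using K finF unfolding m_def by auto
    moreover have "finite K'" using K' finV unfolding Defs.clique_def by (meson finite_subset)
    ultimately show "K' = K" using K' by (metis card_seteq)
  qed
  then show ?thesis using K unfolding F_def by auto
qed

lemma finite_cm_set:
  assumes g: "graph V E"
  shows "finite {classes_meeting V E K | K. max_clique V E K}"
proof -
  have finV: "finite V" using g graph_def by blast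
  have "{K. max_clique V E K} \<subseteq> Pow V" unfolding max_clique_def Defs.clique_def by auto
  then have "finite {K. max_clique V E K}" using finV by (meson finite_Pow_iff finite_subset)
  moreover have "{classes_meeting V E K | K. max_clique V E K} = classes_meeting V E ` {K. max_clique V E K}"
    by auto
  ultimately show ?thesis by simp
qed

lemma le_omega:
  assumes g: "graph V E" and K: "max_clique V E K"
  shows "classes_meeting V E K \<le> omega_tilde V E"
  unfolding omega_tilde_def using finite_cm_set[OF g] K by (intro Max_ge) auto

lemma lower_gen:
  assumes g: "graph V E" and ind: "induced_sub (tmpl B cY n) V E"
    and rows: "\<forall>i\<in>{1..n}. \<forall>j\<in>{1..n}. i \<noteq> j \<longrightarrow> (\<exists>t\<in>{1..n}. B i t \<noteq> B j t)"
  shows "n \<le> omega_tilde V E"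
proof -
  obtain h where h: "inj_on h (tmpl_V n)" "h ` tmpl_V n \<subseteq> V"
    "\<forall>x\<in>tmpl_V n. \<forall>y\<in>tmpl_V n. snd (tmpl B cY n) x y \<longleftrightarrow> E (h x) (h y)"
    using ind unfolding induced_sub_def tmpl_def by auto
  define hx where "hx i = h (False, i)" for i
  define hy where "hy i = h (True, i)" for i
  have inV: "hx i \<in> V" "hy i \<in> V" if "i \<in> {1..n}" for i
    using h(2) that unfolding hx_def hy_def tmpl_V_def by auto
  have Exx: "E (hx i) (hx j) \<longleftrightarrow> i \<noteq> j" if "i \<in> {1..n}" "j \<in> {1..n}" for i j
  proof -
    have "(False,i) \<in> tmpl_V n" "(False,j) \<in> tmpl_V n" using that unfolding tmpl_V_def by auto
    from h(3)[rule_format, OF this] show ?thesis unfolding hx_def tmpl_def tmpl_V_def using that by auto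
  qed
  have Exy: "E (hx i) (hy j) \<longleftrightarrow> B i j" if "i \<in> {1..n}" "j \<in> {1..n}" for i j
  proof -
    have "(False,i) \<in> tmpl_V n" "(True,j) \<in> tmpl_V n" using that unfolding tmpl_V_def by auto
    from h(3)[rule_format, OF this] show ?thesis unfolding hx_def hy_def tmpl_def tmpl_V_def using that by auto
  qed
  have neq: "hx i \<noteq> hy j" if "i \<in> {1..n}" "j \<in> {1..n}" for i j
  proof -
    have "(False,i) \<in> tmpl_V n" "(True,j) \<in> tmpl_V n" using that unfolding tmpl_V_def by auto
    from inj_onD[OF h(1) _ this] show ?thesis unfolding hx_def hy_def by auto
  qed
  have injx: "inj_on hx {1..n}"
    unfolding inj_on_def
  proof (intro ballI impI)
    fix i j assume ij: "i \<in> {1..n}" "j \<in> {1..n}" "hx i = hx j"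
    have "(False,i) \<in> tmpl_V n" "(False,j) \<in> tmpl_V n" using ij unfolding tmpl_V_def by auto
    from inj_onD[OF h(1) _ this] ij show "i = j" unfolding hx_def by auto
  qed
  have "Defs.clique V E (hx ` {1..n})"
    unfolding Defs.clique_def using inV Exx by auto
  then obtain K0 where K0: "max_clique V E K0" "hx ` {1..n} \<subseteq> K0"
    using ex_max_clique[OF g] by blast
  have sep: "\<not> clique_equiv V E (hx i) (hx j)"
    if ij: "i \<in> {1..n}" "j \<in> {1..n}" "t \<in> {1..n}" "B i t" "\<not> B j t" for i j t
  proof -
    define D where "D = hx ` {k \<in> {1..n}. B k t} \<union> {hy t}"
    have "Defs.clique V E D" unfolding D_def Defs.clique_def
    proof (intro conjI ballI impI)
      show "hx ` {k \<in> {1..n}. B k t} \<union> {hy t} \<subseteq> V" using inV ij by auto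
    next
      fix x y assume xy: "x \<in> hx ` {k \<in> {1..n}. B k t} \<union> {hy t}" "y \<in> hx ` {k \<in> {1..n}. B k t} \<union> {hy t}" "x \<noteq> y"
      show "E x y"
      proof -
        { fix a b assume "a \<in> {1..n}" "b \<in> {1..n}" "hx a \<noteq> hx b"
          then have "E (hx a) (hx b)" using Exx by auto }
        moreover
        { fix a assume "a \<in> {1..n}" "B a t"
          then have "E (hx a) (hy t)" "E (hy t) (hx a)" using Exy ij graph_E[OF g] by auto }
        ultimately show ?thesis using xy(1,2,3) by blast
      qed
    qed
    then obtain K' where K': "max_clique V E K'" "D \<subseteq> K'" using ex_max_clique[OF g] by blast
    have "hx i \<in> K'" using K' ij unfolding D_def by auto
    moreover have "hx j \<notin> K'"
    proof
      assume "hx j \<in> K'"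
      moreover have "hy t \<in> K'" using K' unfolding D_def by auto
      moreover have "hx j \<noteq> hy t" using neq ij by blast
      moreover have "Defs.clique V E K'" using K'(1) unfolding max_clique_def by blast
      ultimately have "E (hx j) (hy t)" unfolding Defs.clique_def by blast
      then show False using Exy ij by auto
    qed
    ultimately show ?thesis using K'(1) unfolding clique_equiv_def by auto
  qed
  have cls_ne: "equiv_class V E (hx i) \<noteq> equiv_class V E (hx j)"
    if ij: "i \<in> {1..n}" "j \<in> {1..n}" "i \<noteq> j" for i j
  proof
    assume eq: "equiv_class V E (hx i) = equiv_class V E (hx j)"
    have "hx i \<in> V" using inV ij by blast
    then have "hx i \<in> equiv_class V E (hx i)" unfolding equiv_class_def clique_equiv_def by simp
    then have "hx i \<in> equiv_class V E (hx j)" using eq by simp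
    then have ce: "clique_equiv V E (hx i) (hx j)" unfolding equiv_class_def by simp
    obtain t where t: "t \<in> {1..n}" "B i t \<noteq> B j t" using rows ij(1,2,3) by meson
    show False
    proof (cases "B i t")
      case True
      then have "\<not> B j t" using t(2) by simp
      then show ?thesis using sep[OF ij(1,2) t(1) True] ce by simp
    next
      case False
      have "clique_equiv V E (hx j) (hx i)" using ce unfolding clique_equiv_def by blast
      moreover have "B j t" using t(2) False by simp
      ultimately show ?thesis using sep[OF ij(2,1) t(1)] False by simp
    qed
  qed
  define Cs where "Cs = {C \<in> equiv_class V E ` V. C \<inter> K0 \<noteq> {}}"
  have finV: "finite V" using g graph_def by blast
  have "finite Cs" unfolding Cs_def using finV by auto
  have sub: "(\<lambda>i. equiv_class V E (hx i)) ` {1..n} \<subseteq> Cs"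
  proof
    fix C assume "C \<in> (\<lambda>i. equiv_class V E (hx i)) ` {1..n}"
    then obtain i where i: "i \<in> {1..n}" "C = equiv_class V E (hx i)" by auto
    have "hx i \<in> V" using inV i by blast
    then have "hx i \<in> C" using i unfolding equiv_class_def clique_equiv_def by simp
    moreover have "hx i \<in> V" "hx i \<in> K0" using i(1) inV K0(2) by auto
    ultimately show "C \<in> Cs" unfolding Cs_def using i(2) by blast
  qed
  have "inj_on (\<lambda>i. equiv_class V E (hx i)) {1..n}"
    using cls_ne unfolding inj_on_def by blast
  then have "card {1..n} \<le> card Cs"
    using card_inj_on_le[OF _ sub \<open>finite Cs\<close>] by auto
  then have "n \<le> classes_meeting V E K0" unfolding classes_meeting_def Cs_def by simp
  then show ?thesis using le_omega[OF g K0(1)] by linarith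
qed

lemma fam_cases:
  "X \<in> family_A \<Longrightarrow> \<exists>B cY. X = tmpl B cY \<and> (B = matching_rel \<or> B = antimatching_rel \<or> B = half_rel)"
proof -
  assume "X \<in> family_A"
  then have "X = M_KI \<or> X = M_KK \<or> X = A_KI \<or> X = A_KK \<or> X = H_KI \<or> X = H_KK"
    unfolding family_A_def by blast
  then show ?thesis unfolding M_KI_def M_KK_def A_KI_def A_KK_def H_KI_def H_KK_def by blast
qed

lemma lower:
  assumes g: "graph V E" and X: "X \<in> family_A" and ind: "induced_sub (X n) V E"
  shows "n \<le> omega_tilde V E"
proof -
  obtain B cY where B: "X = tmpl B cY" "B = matching_rel \<or> B = antimatching_rel \<or> B = half_rel"
    using fam_cases[OF X] by blast
  have rows: "\<forall>i\<in>{1..n}. \<forall>j\<in>{1..n}. i \<noteq> j \<longrightarrow> (\<exists>t\<in>{1..n}. B i t \<noteq> B j t)"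
  proof (intro ballI impI)
    fix i j assume ij: "i \<in> {1..n}" "j \<in> {1..n}" "i \<noteq> j"
    show "\<exists>t\<in>{1..n}. B i t \<noteq> B j t"
      using B(2)
    proof (elim disjE)
      assume "B = matching_rel" then show ?thesis using ij by (intro bexI[of _ i]) (auto simp: matching_rel_def)
    next
      assume "B = antimatching_rel" then show ?thesis using ij by (intro bexI[of _ i]) (auto simp: antimatching_rel_def)
    next
      assume "B = half_rel" then show ?thesis using ij by (intro bexI[of _ "min i j"]) (auto simp: half_rel_def min_def)
    qed
  qed
  show ?thesis using lower_gen[OF g _ rows] ind B(1) by auto
qed


lemma tree_lemma:
  fixes R :: "'v \<Rightarrow> 'w \<Rightarrow> bool"
  assumes "finite S" "card S \<ge> 2^d" "\<forall>a\<in>S. \<forall>a'\<in>S. a \<noteq> a' \<longrightarrow> (\<exists>w\<in>W. R a w \<noteq> R a' w)"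
  shows "\<exists>x w b. (\<forall>k<d. x k \<in> S \<and> w k \<in> W) \<and> (\<forall>k<d. \<forall>l<k. R (x k) (w l) = b l)
     \<and> (\<forall>k<d. R (x k) (w k) = (\<not> b k))"
  using assms
proof (induction d arbitrary: S)
  case 0
  then show ?case by auto
next
  case (Suc d)
  have "(2::nat) \<le> 2^(Suc d)" using one_le_power[of "2::nat" d] by simp
  then have c2: "2 \<le> card S" using Suc.prems(2) by linarith
  then have "S \<noteq> {}" by auto
  then obtain a where a: "a \<in> S" by blast
  have "card (S - {a}) \<ge> 1" using c2 a Suc.prems(1) by simp
  then have "S - {a} \<noteq> {}" by (metis card.empty not_one_le_zero)
  then obtain a' where a': "a' \<in> S - {a}" by blast
  have aa: "a \<in> S" "a' \<in> S" "a \<noteq> a'" using a a' by auto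
  have "\<exists>w\<in>W. R a w \<noteq> R a' w" using Suc.prems(3) aa by meson
  then obtain w0 where w0: "w0 \<in> W" "R a w0 \<noteq> R a' w0" by meson
  define S1 where "S1 = {s\<in>S. R s w0}"
  define S0 where "S0 = {s\<in>S. \<not> R s w0}"
  have finS: "finite S1" "finite S0" using Suc.prems(1) unfolding S1_def S0_def by auto
  have SU: "S = S1 \<union> S0" "S1 \<inter> S0 = {}" unfolding S1_def S0_def by auto
  have cs: "card S1 + card S0 = card S"
    using card_Un_disjoint[OF finS SU(2)] SU(1) by simp
  define \<beta> where "\<beta> = (card S1 \<ge> 2^d)"
  define big where "big = {s\<in>S. R s w0 = \<beta>}"
  have big_card: "card big \<ge> 2^d"
  proof (cases \<beta>)
    case True then show ?thesis unfolding big_def \<beta>_def S1_def by (simp add: S1_def \<beta>_def)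
  next
    case False
    then have "big = S0" unfolding big_def S0_def by auto
    then show ?thesis using cs False Suc.prems(2) unfolding \<beta>_def by auto
  qed
  have "\<exists>x0. x0 \<in> S \<and> R x0 w0 = (\<not> \<beta>)"
  proof (cases "R a w0 = \<beta>")
    case True
    then have "R a' w0 = (\<not> \<beta>)" using w0(2) by simp
    then show ?thesis using aa(2) by meson
  next
    case False
    then have "R a w0 = (\<not> \<beta>)" by simp
    then show ?thesis using aa(1) by meson
  qed
  then obtain x0 where x0: "x0 \<in> S" "R x0 w0 = (\<not> \<beta>)" by meson
  have finbig: "finite big" unfolding big_def using Suc.prems(1) by auto
  have distbig: "\<forall>a\<in>big. \<forall>a'\<in>big. a \<noteq> a' \<longrightarrow> (\<exists>w\<in>W. R a w \<noteq> R a' w)"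
    using Suc.prems(3) unfolding big_def by auto
  have IHex: "\<exists>x w b. (\<forall>k<d. x k \<in> big \<and> w k \<in> W) \<and> (\<forall>k<d. \<forall>l<k. R (x k) (w l) = b l)
     \<and> (\<forall>k<d. R (x k) (w k) = (\<not> b k))" by (rule Suc.IH[OF finbig big_card distbig])
  obtain x w b where IHc: "(\<forall>k<d. x k \<in> big \<and> w k \<in> W) \<and> (\<forall>k<d. \<forall>l<k. R (x k) (w l) = b l)
     \<and> (\<forall>k<d. R (x k) (w k) = (\<not> b k))" using IHex by (elim exE) (rule that)
  note IH = IHc[THEN conjunct1] IHc[THEN conjunct2, THEN conjunct1] IHc[THEN conjunct2, THEN conjunct2]
  define x' where "x' = (\<lambda>k. case k of 0 \<Rightarrow> x0 | Suc j \<Rightarrow> x j)"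
  define w' where "w' = (\<lambda>k. case k of 0 \<Rightarrow> w0 | Suc j \<Rightarrow> w j)"
  define b' where "b' = (\<lambda>k. case k of 0 \<Rightarrow> \<beta> | Suc j \<Rightarrow> b j)"
  show ?case
  proof (intro exI[of _ x'] exI[of _ w'] exI[of _ b'] conjI allI impI)
    fix k assume "k < Suc d"
    then show "x' k \<in> S" "w' k \<in> W" using IH(1) x0 w0 unfolding x'_def w'_def big_def
      by (auto split: nat.split)
    show "R (x' k) (w' k) = (\<not> b' k)" using IH(3) x0 \<open>k < Suc d\<close> unfolding x'_def w'_def b'_def
      by (auto split: nat.split)
  next
    fix k l assume kl: "k < Suc d" "l < k"
    then obtain j where j: "k = Suc j" "j < d" by (cases k) auto
    show "R (x' k) (w' l) = b' l"
    proof (cases l)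
      case 0 then show ?thesis using IH(1) j unfolding x'_def w'_def b'_def big_def by auto
    next
      case (Suc i) then show ?thesis using IH(2) j kl unfolding x'_def w'_def b'_def by auto
    qed
  qed
qed

lemma ramsey_pairs:
  "\<exists>N. \<forall>col :: nat \<Rightarrow> nat \<Rightarrow> nat. (\<forall>k l. col k l < c) \<longrightarrow>
     (\<exists>H \<subseteq> {..<N}. card H = m \<and> (\<exists>i. \<forall>k\<in>H. \<forall>l\<in>H. k < l \<longrightarrow> col k l = i))"
proof -
  obtain N :: nat where N: "partn_lst {..<N} (replicate c m) 2" using ramsey_full by blast
  show ?thesis
  proof (rule exI[of _ N], intro allI impI)
    fix col :: "nat \<Rightarrow> nat \<Rightarrow> nat" assume col: "\<forall>k l. col k l < c"
    define f where "f e = col (Min e) (Max e)" for e :: "nat set"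
    have "f \<in> nsets {..<N} 2 \<rightarrow> {..<c}" using col unfolding f_def by auto
    then obtain i H where iH: "i < length (replicate c m)" "H \<in> nsets {..<N} (replicate c m ! i)"
       "f ` (nsets H 2) \<subseteq> {i}"
      using partn_lstE[OF N] by (metis length_replicate)
    have "\<forall>k\<in>H. \<forall>l\<in>H. k < l \<longrightarrow> col k l = i"
    proof (intro ballI impI)
      fix k l assume "k \<in> H" "l \<in> H" "k < l"
      then have "{k,l} \<in> nsets H 2" by simp
      then have "f {k,l} = i" using iH(3) by blast
      then show "col k l = i" unfolding f_def using \<open>k<l\<close> by (simp add: max_def min_def)
    qed
    then show "\<exists>H \<subseteq> {..<N}. card H = m \<and> (\<exists>i. \<forall>k\<in>H. \<forall>l\<in>H. k < l \<longrightarrow> col k l = i)"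
      using iH(1,2) by (auto simp: nsets_def)
  qed
qed


lemma E_sym: "graph V E \<Longrightarrow> E x y = E y x"
  unfolding graph_def by blast

lemma clique_E: "Defs.clique V E K \<Longrightarrow> a \<in> K \<Longrightarrow> b \<in> K \<Longrightarrow> a \<noteq> b \<Longrightarrow> E a b"
  unfolding Defs.clique_def by blast

lemma clique_V: "Defs.clique V E K \<Longrightarrow> a \<in> K \<Longrightarrow> a \<in> V"
  unfolding Defs.clique_def by blast

lemma nb_equiv_dir:
  assumes g: "graph V E" and K: "Defs.clique V E K" and uv: "u \<in> K" "v \<in> K"
    and nb: "\<forall>w\<in>V-K. E u w \<longrightarrow> E v w" and K': "max_clique V E K'" and uK': "u \<in> K'"
  shows "v \<in> K'"
proof (rule ccontr)
  assume vK': "v \<notin> K'"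
  then have uv_ne: "u \<noteq> v" using uK' by blast
  have vV: "v \<in> V" using K uv unfolding Defs.clique_def by blast
  have K'c: "Defs.clique V E K'" using K' unfolding max_clique_def by blast
  have "\<not> Defs.clique V E (insert v K')"
  proof
    assume "Defs.clique V E (insert v K')"
    then have "insert v K' = K'" using K' unfolding max_clique_def by blast
    then show False using vK' by blast
  qed
  moreover have "insert v K' \<subseteq> V" using K'c vV unfolding Defs.clique_def by blast
  ultimately obtain x y where xy: "x \<in> insert v K'" "y \<in> insert v K'" "x \<noteq> y" "\<not> E x y"
    unfolding Defs.clique_def by blast
  have "\<exists>z. z \<in> K' \<and> z \<noteq> v \<and> \<not> E v z"
  proof (cases "x = v")
    case True
    then show ?thesis using xy by blast
  next
    case False
    then have xK: "x \<in> K'" using xy(1) by blast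
    show ?thesis
    proof (cases "y = v")
      case True
      then have "\<not> E v x" using xy(4) E_sym[OF g, of x y] by simp
      then show ?thesis using xK False by blast
    next
      case False
      then have "y \<in> K'" using xy(2) by blast
      then have "E x y" using K'c xK xy(3) unfolding Defs.clique_def by blast
      then show ?thesis using xy(4) by blast
    qed
  qed
  then obtain z where z: "z \<in> K'" "z \<noteq> v" "\<not> E v z" by blast
  have zV: "z \<in> V" using clique_V[OF K'c z(1)] .
  have Euv: "E u v" using clique_E[OF K uv uv_ne] .
  then have "E v u" using E_sym[OF g, of u v] by simp
  then have zu: "z \<noteq> u" using z(3) by auto
  have zK: "z \<notin> K"
  proof
    assume "z \<in> K"
    then show False using clique_E[OF K uv(2) _ z(2)[symmetric]] z(3) by blast
  qed
  have "E u z" using clique_E[OF K'c uK' z(1) zu[symmetric]] .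
  then have "E v z" using nb zV zK by blast
  then show False using z(3) by blast
qed

lemma class_eq:
  assumes "u \<in> equiv_class V E v"
  shows "equiv_class V E u = equiv_class V E v"
  using assms unfolding equiv_class_def clique_equiv_def by auto

lemma embed:
  assumes g: "graph V E"
    and inV: "\<forall>i\<in>{1..n}. hx i \<in> V \<and> hy i \<in> V"
    and dis: "\<forall>i\<in>{1..n}. \<forall>j\<in>{1..n}. hx i \<noteq> hy j"
    and yinj: "\<forall>i\<in>{1..n}. \<forall>j\<in>{1..n}. hy i = hy j \<longrightarrow> i = j"
    and xx: "\<forall>i\<in>{1..n}. \<forall>j\<in>{1..n}. E (hx i) (hx j) = (i \<noteq> j)"
    and yy: "\<forall>i\<in>{1..n}. \<forall>j\<in>{1..n}. E (hy i) (hy j) = (i \<noteq> j \<and> cY)"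
    and xy: "\<forall>i\<in>{1..n}. \<forall>j\<in>{1..n}. E (hx i) (hy j) = B i j"
  shows "induced_sub (tmpl B cY n) V E"
proof -
  define h where "h u = (if fst u then hy (snd u) else hx (snd u))" for u :: "bool \<times> nat"
  have xinj: "i = j" if "i \<in> {1..n}" "j \<in> {1..n}" "hx i = hx j" for i j
  proof (rule ccontr)
    assume "i \<noteq> j"
    then have "E (hx i) (hx j)" using xx that(1,2) by blast
    then show False using graph_E[OF g] that(3) by metis
  qed
  have tv: "u \<in> tmpl_V n \<longleftrightarrow> snd u \<in> {1..n}" for u unfolding tmpl_V_def by (cases u) auto
  have "inj_on h (tmpl_V n)"
    unfolding inj_on_def
  proof (intro ballI impI)
    fix u v assume uv: "u \<in> tmpl_V n" "v \<in> tmpl_V n" "h u = h v"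
    obtain a i where u: "u = (a, i)" by (cases u)
    obtain c j where v: "v = (c, j)" by (cases v)
    have ij: "i \<in> {1..n}" "j \<in> {1..n}" using tv[of u] tv[of v] uv(1,2) u v by simp_all
    show "u = v"
    proof (cases a; cases c)
      assume ac: "a" "c"
      then have "hy i = hy j" using uv(3) u v unfolding h_def by simp
      then have "i = j" using yinj ij by blast
      then show ?thesis using u v ac by simp
    next
      assume ac: "a" "\<not> c"
      then have "hy i = hx j" using uv(3) u v unfolding h_def by simp
      then show ?thesis using dis ij by metis
    next
      assume ac: "\<not> a" "c"
      then have "hx i = hy j" using uv(3) u v unfolding h_def by simp
      then show ?thesis using dis ij by blast
    next
      assume ac: "\<not> a" "\<not> c"
      then have "hx i = hx j" using uv(3) u v unfolding h_def by simp
      then have "i = j" using xinj ij by blast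
      then show ?thesis using u v ac by simp
    qed
  qed
  moreover have "h ` tmpl_V n \<subseteq> V" using inV tv unfolding h_def by auto
  moreover have "\<forall>u\<in>tmpl_V n. \<forall>v\<in>tmpl_V n. snd (tmpl B cY n) u v \<longleftrightarrow> E (h u) (h v)"
  proof (intro ballI)
    fix u v assume uv: "u \<in> tmpl_V n" "v \<in> tmpl_V n"
    obtain a i where u: "u = (a, i)" by (cases u)
    obtain c j where v: "v = (c, j)" by (cases v)
    have ij: "i \<in> {1..n}" "j \<in> {1..n}" using tv[of u] tv[of v] uv(1,2) u v by simp_all
    have s: "snd (tmpl B cY n) u v = (u \<noteq> v \<and> ((\<not> a \<and> \<not> c) \<or> (cY \<and> a \<and> c) \<or> (\<not> a \<and> c \<and> B i j) \<or> (a \<and> \<not> c \<and> B j i)))"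
      using uv u v unfolding tmpl_def by simp
    show "snd (tmpl B cY n) u v \<longleftrightarrow> E (h u) (h v)"
    proof (cases a; cases c)
      assume "a" "c" then show ?thesis using s u v yy ij unfolding h_def by auto
    next
      assume "a" "\<not> c" then show ?thesis using s u v xy ij E_sym[OF g] unfolding h_def by auto
    next
      assume "\<not> a" "c" then show ?thesis using s u v xy ij unfolding h_def by auto
    next
      assume "\<not> a" "\<not> c" then show ?thesis using s u v xx ij unfolding h_def by auto
    qed
  qed
  ultimately show ?thesis unfolding induced_sub_def tmpl_def by auto
qed

lemma fam_mem:
  assumes "B = matching_rel \<or> B = antimatching_rel \<or> B = half_rel"
  shows "tmpl B c \<in> family_A"
  using assms unfolding family_A_def M_KI_def M_KK_def A_KI_def A_KK_def H_KI_def H_KK_def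
  by (cases c) auto

lemma code_inj:
  "(if a then 4 else 0) + (if b then 2 else 0) + (if c then 1 else (0::nat)) =
   (if a' then 4 else 0) + (if b' then 2 else 0) + (if c' then 1 else 0) \<Longrightarrow> a = a' \<and> b = b' \<and> c = c'"
  by (cases a; cases b; cases c; cases a'; cases b'; cases c'; simp)


lemma extract_struct:
  assumes g: "graph V E" and K: "Defs.clique V E K" and S: "S \<subseteq> K" "finite S"
    and dist: "\<forall>a\<in>S. \<forall>a'\<in>S. a \<noteq> a' \<longrightarrow> (\<exists>w\<in>V-K. E a w \<noteq> E a' w)"
    and RN: "\<forall>col::nat\<Rightarrow>nat\<Rightarrow>nat. (\<forall>k l. col k l < 8) \<longrightarrow>
        (\<exists>H\<subseteq>{..<N}. card H = n+2 \<and> (\<exists>i. \<forall>k\<in>H. \<forall>l\<in>H. k<l \<longrightarrow> col k l = i))"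
    and cardS: "card S \<ge> 2^N" and n: "n \<ge> 1"
  shows "\<exists>X\<in>family_A. induced_sub (X n) V E"
proof -
  obtain x w b where Tc: "(\<forall>k<N. x k \<in> S \<and> w k \<in> V-K) \<and> (\<forall>k<N. \<forall>l<k. E (x k) (w l) = b l)
     \<and> (\<forall>k<N. E (x k) (w k) = (\<not> b k))"
    using tree_lemma[OF S(2) cardS dist] by (elim exE) (rule that)
  note T = Tc[THEN conjunct1] Tc[THEN conjunct2, THEN conjunct1] Tc[THEN conjunct2, THEN conjunct2]
  define col where "col k l = (if b k then 4 else 0) + (if E (x k) (w l) then 2 else 0)
      + (if E (w k) (w l) then 1 else (0::nat))" for k l
  have col8: "\<forall>k l. col k l < 8" unfolding col_def by simp
  have "\<exists>H\<subseteq>{..<N}. card H = n+2 \<and> (\<exists>i. \<forall>k\<in>H. \<forall>l\<in>H. k<l \<longrightarrow> col k l = i)"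
    using mp[OF spec[OF RN, of col] col8] .
  then obtain H where H0: "H \<subseteq> {..<N} \<and> card H = n+2 \<and> (\<exists>i. \<forall>k\<in>H. \<forall>l\<in>H. k<l \<longrightarrow> col k l = i)"
    by (elim exE) (rule that)
  then obtain i0 where H3: "\<forall>k\<in>H. \<forall>l\<in>H. k<l \<longrightarrow> col k l = i0"
    by (elim conjE exE) (rule that)
  have H: "H \<subseteq> {..<N}" "card H = n+2" "\<forall>k\<in>H. \<forall>l\<in>H. k<l \<longrightarrow> col k l = i0"
    using H0 H3 by simp_all
  have finH: "finite H" using H(1) finite_subset by blast
  define L where "L = sorted_list_of_set H"
  define idx where "idx j = L ! j" for j
  have lenL: "length L = n+2" unfolding L_def using H(2) by simp
  have sL: "sorted_wrt (<) L" unfolding L_def by (rule strict_sorted_list_of_set)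
  have setL: "set L = H" unfolding L_def using finH by simp
  have idx_in: "idx j \<in> H" if "j < n+2" for j
    unfolding idx_def using that lenL setL nth_mem by metis
  have idx_lt: "idx j < N" if "j < n+2" for j using idx_in[OF that] H(1) by auto
  have idx_mono: "idx j < idx j'" if "j < j'" "j' < n+2" for j j'
    unfolding idx_def using sorted_wrt_nth_less[OF sL that(1)] that lenL by simp
  define \<beta> where "\<beta> = b (idx 0)"
  define \<gamma> where "\<gamma> = E (x (idx 0)) (w (idx 1))"
  define \<epsilon> where "\<epsilon> = E (w (idx 0)) (w (idx 1))"
  have hom: "b (idx j) = \<beta> \<and> E (x (idx j)) (w (idx j')) = \<gamma> \<and> E (w (idx j)) (w (idx j')) = \<epsilon>"
    if "j < j'" "j' < n+2" for j j'
  proof -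
    have "col (idx j) (idx j') = i0" using H(3) idx_in idx_mono that by simp
    moreover have "col (idx 0) (idx 1) = i0" using H(3) idx_in idx_mono n by simp
    ultimately have "col (idx j) (idx j') = col (idx 0) (idx 1)" by simp
    then show ?thesis unfolding col_def \<beta>_def \<gamma>_def \<epsilon>_def by (rule code_inj)
  qed
  define X' where "X' j = x (idx j)" for j
  define Y' where "Y' j = w (idx j)" for j
  have XK: "X' j \<in> K" "Y' j \<in> V - K" if "j \<le> n" for j
    using T(1) idx_lt[of j] that S(1) unfolding X'_def Y'_def by auto
  have bj: "b (idx j) = \<beta>" if "j \<le> n" for j using hom[where j=j and j'="n+1"] that by simp
  have P1: "E (X' j) (Y' j') = \<gamma>" if "j < j'" "j' \<le> n" for j j'
    using hom[where j=j and j'=j'] that unfolding X'_def Y'_def by simp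
  have P2: "E (X' j) (Y' j') = \<beta>" if "j' < j" "j \<le> n" for j j'
  proof -
    have "E (x (idx j)) (w (idx j')) = b (idx j')"
      using T(2) idx_lt[of j] idx_mono[where j=j' and j'=j] that by simp
    then show ?thesis using bj[of j'] that unfolding X'_def Y'_def by simp
  qed
  have P3: "E (X' j) (Y' j) = (\<not> \<beta>)" if "j \<le> n" for j
    using T(3) idx_lt[of j] bj[of j] that unfolding X'_def Y'_def by simp
  have P4: "E (Y' j) (Y' j') = \<epsilon>" if "j \<noteq> j'" "j \<le> n" "j' \<le> n" for j j'
  proof (cases "j < j'")
    case True then show ?thesis using hom[where j=j and j'=j'] that unfolding Y'_def by simp
  next
    case False
    then have "j' < j" using that by simp
    then have "E (Y' j') (Y' j) = \<epsilon>" using hom[where j=j' and j'=j] that unfolding Y'_def by simp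
    then show ?thesis using E_sym[OF g] by metis
  qed
  have Xne: "X' j \<noteq> X' j'" if jj: "j < j'" "j' \<le> n" for j j'
  proof
    assume eq: "X' j = X' j'"
    have "E (X' j') (Y' j) = (\<not> \<beta>)" using P3[of j] eq jj by simp
    moreover have "E (X' j') (Y' j) = \<beta>" using P2[where j=j' and j'=j] jj by simp
    ultimately show False by simp
  qed
  have Yne: "Y' j \<noteq> Y' j'" if jj: "j < j'" "j' \<le> n" for j j'
  proof
    assume eq: "Y' j = Y' j'"
    have "E (X' j') (Y' j) = (\<not> \<beta>)" using P3[of j'] eq jj by simp
    moreover have "E (X' j') (Y' j) = \<beta>" using P2[where j=j' and j'=j] jj by simp
    ultimately show False by simp
  qed
  have XX: "E (X' j) (X' j') = (j \<noteq> j')" if "j \<le> n" "j' \<le> n" for j j'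
  proof (cases "j = j'")
    case True then show ?thesis using graph_E[OF g] by auto
  next
    case False
    then consider "j < j'" | "j' < j" by linarith
    then have "X' j \<noteq> X' j'" using Xne[where j=j and j'=j'] Xne[where j=j' and j'=j] that by cases auto
    then show ?thesis using clique_E[OF K XK(1)[OF that(1)] XK(1)[OF that(2)]] False by simp
  qed
  have YY: "E (Y' j) (Y' j') = (j \<noteq> j' \<and> \<epsilon>)" if "j \<le> n" "j' \<le> n" for j j'
  proof (cases "j = j'")
    case True then show ?thesis using graph_E[OF g] by auto
  next
    case False then show ?thesis using P4 that by simp
  qed
  have Yinj: "j = j'" if "j \<le> n" "j' \<le> n" "Y' j = Y' j'" for j j'
  proof (rule ccontr)
    assume "j \<noteq> j'"
    then consider "j < j'" | "j' < j" by linarith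
    then show False using Yne[where j=j and j'=j'] Yne[where j=j' and j'=j] that by cases auto
  qed
  have emb: "induced_sub (tmpl B \<epsilon> n) V E"
    if st: "\<forall>i\<in>{1..n}. \<sigma> i \<le> n \<and> \<tau> i \<le> n" "inj_on \<tau> {1..n}" "inj_on \<sigma> {1..n}"
      and e: "\<forall>i\<in>{1..n}. \<forall>j\<in>{1..n}. E (X' (\<sigma> i)) (Y' (\<tau> j)) = B i j" for \<sigma> \<tau> B
  proof (rule embed[OF g])
    show "\<forall>i\<in>{1..n}. X' (\<sigma> i) \<in> V \<and> Y' (\<tau> i) \<in> V"
    proof
      fix i assume i: "i \<in> {1..n}"
      then have "\<sigma> i \<le> n" "\<tau> i \<le> n" using st(1) by auto
      then show "X' (\<sigma> i) \<in> V \<and> Y' (\<tau> i) \<in> V" using XK clique_V[OF K] by blast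
    qed
    show "\<forall>i\<in>{1..n}. \<forall>j\<in>{1..n}. X' (\<sigma> i) \<noteq> Y' (\<tau> j)"
    proof (intro ballI)
      fix i j assume ij: "i \<in> {1..n}" "j \<in> {1..n}"
      then have "\<sigma> i \<le> n" "\<tau> j \<le> n" using st(1) by auto
      then have "X' (\<sigma> i) \<in> K" "Y' (\<tau> j) \<notin> K" using XK by auto
      then show "X' (\<sigma> i) \<noteq> Y' (\<tau> j)" by metis
    qed
    show "\<forall>i\<in>{1..n}. \<forall>j\<in>{1..n}. Y' (\<tau> i) = Y' (\<tau> j) \<longrightarrow> i = j"
    proof (intro ballI impI)
      fix i j assume ij: "i \<in> {1..n}" "j \<in> {1..n}" and eq: "Y' (\<tau> i) = Y' (\<tau> j)"
      then have "\<tau> i \<le> n" "\<tau> j \<le> n" using st(1) by auto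
      then have "\<tau> i = \<tau> j" using Yinj eq by blast
      then show "i = j" using inj_onD[OF st(2) _ ij] by blast
    qed
    show "\<forall>i\<in>{1..n}. \<forall>j\<in>{1..n}. E (X' (\<sigma> i)) (X' (\<sigma> j)) = (i \<noteq> j)"
    proof (intro ballI)
      fix i j assume ij: "i \<in> {1..n}" "j \<in> {1..n}"
      then have "\<sigma> i \<le> n" "\<sigma> j \<le> n" using st(1) by auto
      then have "E (X' (\<sigma> i)) (X' (\<sigma> j)) = (\<sigma> i \<noteq> \<sigma> j)" by (rule XX)
      moreover have "(\<sigma> i = \<sigma> j) = (i = j)" using inj_onD[OF st(3) _ ij] by blast
      ultimately show "E (X' (\<sigma> i)) (X' (\<sigma> j)) = (i \<noteq> j)" by simp
    qed
    show "\<forall>i\<in>{1..n}. \<forall>j\<in>{1..n}. E (Y' (\<tau> i)) (Y' (\<tau> j)) = (i \<noteq> j \<and> \<epsilon>)"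
    proof (intro ballI)
      fix i j assume ij: "i \<in> {1..n}" "j \<in> {1..n}"
      then have "\<tau> i \<le> n" "\<tau> j \<le> n" using st(1) by auto
      then have "E (Y' (\<tau> i)) (Y' (\<tau> j)) = (\<tau> i \<noteq> \<tau> j \<and> \<epsilon>)" by (rule YY)
      moreover have "(\<tau> i = \<tau> j) = (i = j)" using inj_onD[OF st(2) _ ij] by blast
      ultimately show "E (Y' (\<tau> i)) (Y' (\<tau> j)) = (i \<noteq> j \<and> \<epsilon>)" by simp
    qed
    show "\<forall>i\<in>{1..n}. \<forall>j\<in>{1..n}. E (X' (\<sigma> i)) (Y' (\<tau> j)) = B i j" using e .
  qed
  have gen: "E (X' i) (Y' j) = (if i < j then \<gamma> else if j < i then \<beta> else \<not> \<beta>)"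
    if ij: "i \<le> n" "j \<le> n" for i j
  proof -
    consider "i < j" | "j < i" | "i = j" by linarith
    then show ?thesis
    proof cases
      case 1 then show ?thesis using P1[where j=i and j'=j] ij by simp
    next
      case 2 then show ?thesis using P2[where j=i and j'=j] ij by simp
    next
      case 3 then show ?thesis using P3[of i] ij by simp
    qed
  qed
  have idst: "\<forall>i\<in>{1..n}. (\<lambda>i. i) i \<le> n \<and> (\<lambda>i. i) i \<le> n" "inj_on (\<lambda>i. i) {1..n}" by auto
  show ?thesis
  proof (cases \<beta>; cases \<gamma>)
    assume bg: \<beta> \<gamma>
    have "\<forall>i\<in>{1..n}. \<forall>j\<in>{1..n}. E (X' i) (Y' j) = antimatching_rel i j"
    proof (intro ballI)
      fix i j assume ij: "i \<in> {1..n}" "j \<in> {1..n}"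
      then have "E (X' i) (Y' j) = (if i < j then \<gamma> else if j < i then \<beta> else \<not> \<beta>)" using gen by simp
      then show "E (X' i) (Y' j) = antimatching_rel i j" using bg unfolding antimatching_rel_def
        by (simp split: if_splits)
    qed
    then have "induced_sub (tmpl antimatching_rel \<epsilon> n) V E" using emb[OF idst idst(2)] by simp
    moreover have "tmpl antimatching_rel \<epsilon> \<in> family_A" by (rule fam_mem) simp
    ultimately show ?thesis by blast
  next
    assume bg: \<beta> "\<not> \<gamma>"
    have st: "\<forall>i\<in>{1..n}. (\<lambda>i. n+1-i) i \<le> n \<and> (\<lambda>i. n-i) i \<le> n" by auto
    have i1: "inj_on (\<lambda>i. n+1-i) {1..n}" "inj_on (\<lambda>i. n-i) {1..n}" unfolding inj_on_def by auto
    have "\<forall>i\<in>{1..n}. \<forall>j\<in>{1..n}. E (X' (n+1-i)) (Y' (n-j)) = half_rel i j"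
    proof (intro ballI)
      fix i j assume ij: "i \<in> {1..n}" "j \<in> {1..n}"
      have le: "n+1-i \<le> n" "n-j \<le> n" using ij by auto
      have G: "E (X' (n+1-i)) (Y' (n-j)) = (if n+1-i < n-j then \<gamma> else if n-j < n+1-i then \<beta> else \<not> \<beta>)"
        by (rule gen[OF le])
      show "E (X' (n+1-i)) (Y' (n-j)) = half_rel i j"
      proof (cases "i \<le> j")
        case True
        then have "n-j < n+1-i" using ij by auto
        then show ?thesis using G True bg unfolding half_rel_def by simp
      next
        case False
        then have "\<not> n-j < n+1-i" using ij by auto
        then show ?thesis using G False bg unfolding half_rel_def by (simp split: if_splits)
      qed
    qed
    then have "induced_sub (tmpl half_rel \<epsilon> n) V E" using emb[OF st i1(2) i1(1)] by simp
    moreover have "tmpl half_rel \<epsilon> \<in> family_A" by (rule fam_mem) simp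
    ultimately show ?thesis by blast
  next
    assume bg: "\<not> \<beta>" \<gamma>
    have "\<forall>i\<in>{1..n}. \<forall>j\<in>{1..n}. E (X' i) (Y' j) = half_rel i j"
    proof (intro ballI)
      fix i j assume ij: "i \<in> {1..n}" "j \<in> {1..n}"
      then have "E (X' i) (Y' j) = (if i < j then \<gamma> else if j < i then \<beta> else \<not> \<beta>)" using gen by simp
      then show "E (X' i) (Y' j) = half_rel i j" using bg unfolding half_rel_def
        by (simp split: if_splits)
    qed
    then have "induced_sub (tmpl half_rel \<epsilon> n) V E" using emb[OF idst idst(2)] by simp
    moreover have "tmpl half_rel \<epsilon> \<in> family_A" by (rule fam_mem) simp
    ultimately show ?thesis by blast
  next
    assume bg: "\<not> \<beta>" "\<not> \<gamma>"
    have "\<forall>i\<in>{1..n}. \<forall>j\<in>{1..n}. E (X' i) (Y' j) = matching_rel i j"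
    proof (intro ballI)
      fix i j assume ij: "i \<in> {1..n}" "j \<in> {1..n}"
      then have "E (X' i) (Y' j) = (if i < j then \<gamma> else if j < i then \<beta> else \<not> \<beta>)" using gen by simp
      then show "E (X' i) (Y' j) = matching_rel i j" using bg unfolding matching_rel_def
        by (simp split: if_splits)
    qed
    then have "induced_sub (tmpl matching_rel \<epsilon> n) V E" using emb[OF idst idst(2)] by simp
    moreover have "tmpl matching_rel \<epsilon> \<in> family_A" by (rule fam_mem) simp
    ultimately show ?thesis by blast
  qed
qed


theorem theorem7p5:
  shows "\<exists>f g :: nat \<Rightarrow> nat. \<forall>(V :: nat set) E. graph V E \<longrightarrow>
     p_fam family_A V E \<le> f (omega_tilde V E) \<and> omega_tilde V E \<le> g (p_fam family_A V E)"
proof -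
  have "\<forall>n. \<exists>N. \<forall>col::nat\<Rightarrow>nat\<Rightarrow>nat. (\<forall>k l. col k l < 8) \<longrightarrow>
        (\<exists>H\<subseteq>{..<N}. card H = n+2 \<and> (\<exists>i. \<forall>k\<in>H. \<forall>l\<in>H. k<l \<longrightarrow> col k l = i))"
    by (intro allI) (rule ramsey_pairs)
  from choice[OF this] obtain Nf where Nf: "\<forall>n. \<forall>col::nat\<Rightarrow>nat\<Rightarrow>nat. (\<forall>k l. col k l < 8) \<longrightarrow>
        (\<exists>H\<subseteq>{..<Nf n}. card H = n+2 \<and> (\<exists>i. \<forall>k\<in>H. \<forall>l\<in>H. k<l \<longrightarrow> col k l = i))"
    by (elim exE) (rule that)
  have main: "p_fam family_A V E \<le> omega_tilde V E \<and> omega_tilde V E \<le> 2 ^ Nf (p_fam family_A V E + 1)"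
    if g: "graph V E" for V :: "nat set" and E
  proof
    define P where "P = {n. 1 \<le> n \<and> (\<exists>X\<in>family_A. induced_sub (X n) V E)}"
    have bnd: "\<forall>n\<in>insert 0 P. n \<le> omega_tilde V E"
    proof
      fix n assume "n \<in> insert 0 P"
      then consider "n = 0" | "n \<in> P" by blast
      then show "n \<le> omega_tilde V E"
      proof cases
        case 1 then show ?thesis by simp
      next
        case 2
        then obtain X where "X \<in> family_A" "induced_sub (X n) V E" unfolding P_def by blast
        then show ?thesis by (rule lower[OF g])
      qed
    qed
    have finP: "finite (insert 0 P)"
      unfolding finite_nat_set_iff_bounded_le using bnd by blast
    have pf: "p_fam family_A V E = Max (insert 0 P)" unfolding p_fam_def P_def by simp
    show "p_fam family_A V E \<le> omega_tilde V E"
      unfolding pf using finP bnd by simp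
    show "omega_tilde V E \<le> 2 ^ Nf (p_fam family_A V E + 1)"
    proof (rule ccontr)
      define p where "p = p_fam family_A V E"
      assume "\<not> omega_tilde V E \<le> 2 ^ Nf (p_fam family_A V E + 1)"
      then have big: "2 ^ Nf (p+1) \<le> omega_tilde V E" unfolding p_def by simp
      have finV: "finite V" using g graph_def by blast
      obtain K0 where "max_clique V E K0"
        using ex_max_clique[OF g, of "{}"] unfolding Defs.clique_def by auto
      then have ne: "{classes_meeting V E K | K. max_clique V E K} \<noteq> {}" by blast
      have "omega_tilde V E \<in> {classes_meeting V E K | K. max_clique V E K}"
        unfolding omega_tilde_def using finite_cm_set[OF g] ne by (rule Max_in)
      then obtain K where K: "max_clique V E K" "classes_meeting V E K = omega_tilde V E" by auto
      have Kc: "Defs.clique V E K" using K(1) unfolding max_clique_def by blast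
      define Cs where "Cs = {C \<in> equiv_class V E ` V. C \<inter> K \<noteq> {}}"
      define rep where "rep C = (SOME v. v \<in> C \<inter> K)" for C
      have rep: "rep C \<in> C \<inter> K" if "C \<in> Cs" for C
      proof -
        have "\<exists>v. v \<in> C \<inter> K" using that unfolding Cs_def by blast
        then show ?thesis unfolding rep_def by (rule someI_ex)
      qed
      have classof: "C = equiv_class V E (rep C)" if Cin: "C \<in> Cs" for C
      proof -
        obtain v where v: "C = equiv_class V E v" using Cin unfolding Cs_def by blast
        show ?thesis using class_eq[of "rep C" V E v] rep[OF Cin] v by simp
      qed
      have injrep: "inj_on rep Cs"
        unfolding inj_on_def using classof by metis
      define S where "S = rep ` Cs"
      have finCs: "finite Cs" unfolding Cs_def using finV by simp
      have cardS: "card S = omega_tilde V E"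
        unfolding S_def using card_image[OF injrep] K(2) unfolding classes_meeting_def Cs_def by simp
      have SK: "S \<subseteq> K" unfolding S_def using rep by blast
      have finS: "finite S" unfolding S_def using finCs by simp
      have dist: "\<forall>a\<in>S. \<forall>a'\<in>S. a \<noteq> a' \<longrightarrow> (\<exists>w\<in>V-K. E a w \<noteq> E a' w)"
      proof (intro ballI impI)
        fix a a' assume aa: "a \<in> S" "a' \<in> S" "a \<noteq> a'"
        obtain C where C: "C \<in> Cs" "a = rep C" using aa(1) unfolding S_def by blast
        obtain C' where C': "C' \<in> Cs" "a' = rep C'" using aa(2) unfolding S_def by blast
        show "\<exists>w\<in>V-K. E a w \<noteq> E a' w"
        proof (rule ccontr)
          assume "\<not> (\<exists>w\<in>V-K. E a w \<noteq> E a' w)"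
          then have same: "\<forall>w\<in>V-K. E a w = E a' w" by blast
          have aK: "a \<in> K" "a' \<in> K" using aa SK by auto
          have "clique_equiv V E a' a"
            unfolding clique_equiv_def
          proof (intro allI impI iffI)
            fix K' assume K': "max_clique V E K'"
            show "a \<in> K'" if "a' \<in> K'"
              using nb_equiv_dir[OF g Kc aK(2) aK(1) _ K' that] same by blast
            show "a' \<in> K'" if "a \<in> K'"
              using nb_equiv_dir[OF g Kc aK(1) aK(2) _ K' that] same by blast
          qed
          moreover have "a' \<in> V" using aK(2) clique_V[OF Kc] by blast
          ultimately have "a' \<in> equiv_class V E a" unfolding equiv_class_def by simp
          then have "equiv_class V E a' = equiv_class V E a" by (rule class_eq)
          then have "C = C'" using classof[OF C(1)] classof[OF C'(1)] C(2) C'(2) by simp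
          then show False using aa(3) C(2) C'(2) by simp
        qed
      qed
      have "\<exists>X\<in>family_A. induced_sub (X (p+1)) V E"
        using extract_struct[OF g Kc SK finS dist spec[OF Nf, of "p+1"]] big cardS by simp
      then have "p+1 \<in> insert 0 P" unfolding P_def by simp
      then have "p+1 \<le> Max (insert 0 P)" using finP by simp
      then show False unfolding p_def pf by simp
    qed
  qed
  show ?thesis
    using main by (intro exI[of _ "\<lambda>m. m"] exI[of _ "\<lambda>m. 2 ^ Nf (m+1)"]) blast
qed

end
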